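(* If $G$ is an $\alpha_i$-metric graph ($i\ge 0$ an integer), then its interval thinness is at most $i+1$; that is, for all vertices $u,v$ and every integer $k$ with $0<k<d(u,v)$, any two vertices $x,y\in I(u,v)$ with $d(u,x)=d(u,y)=k$ satisfy $d(x,y)\le i+1$.
   Context: All graphs are finite, connected, unweighted, undirected, simple; $d(u,v)$ is the shortest-path distance. $I(u,v)=\{x: d(u,x)+d(x,v)=d(u,v)\}$. A graph is $\alpha_i$-metric if for all vertices $u,v,w,x$: whenever $v\in I(u,w)$, $w\in I(v,x)$ and $v,w$ are adjacent, then $d(u,x)\ge d(u,v)+d(v,x)-i$. *)

theory Defs
  imports Main
begin

definition simple_graph :: "'a set \<Rightarrow> ('a \<Rightarrow> 'a \<Rightarrow> bool) \<Rightarrow> bool" where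
  "simple_graph V E \<longleftrightarrow> finite V \<and> V \<noteq> {} \<and>
     (\<forall>x y. E x y \<longrightarrow> x \<in> V \<and> y \<in> V) \<and>
     (\<forall>x y. E x y \<longrightarrow> E y x) \<and> (\<forall>x. \<not> E x x)"

fun walk :: "('a \<Rightarrow> 'a \<Rightarrow> bool) \<Rightarrow> 'a list \<Rightarrow> bool" where
  "walk E [] = False"
| "walk E [x] = True"
| "walk E (x # y # xs) = (E x y \<and> walk E (y # xs))"

definition walk_of_len :: "('a \<Rightarrow> 'a \<Rightarrow> bool) \<Rightarrow> 'a \<Rightarrow> 'a \<Rightarrow> nat \<Rightarrow> bool" where
  "walk_of_len E u v n \<longleftrightarrow> (\<exists>xs. walk E xs \<and> hd xs = u \<and> last xs = v \<and> length xs = Suc n)"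

definition connected_graph :: "'a set \<Rightarrow> ('a \<Rightarrow> 'a \<Rightarrow> bool) \<Rightarrow> bool" where
  "connected_graph V E \<longleftrightarrow> (\<forall>u\<in>V. \<forall>v\<in>V. \<exists>n. walk_of_len E u v n)"

text \<open>Shortest-path distance (meaningful for vertices of a connected graph).\<close>
definition dist :: "('a \<Rightarrow> 'a \<Rightarrow> bool) \<Rightarrow> 'a \<Rightarrow> 'a \<Rightarrow> nat" where
  "dist E u v = (LEAST n. walk_of_len E u v n)"

definition interval :: "'a set \<Rightarrow> ('a \<Rightarrow> 'a \<Rightarrow> bool) \<Rightarrow> 'a \<Rightarrow> 'a \<Rightarrow> 'a set" where
  "interval V E u v = {x\<in>V. dist E u x + dist E x v = dist E u v}"

definition alpha_metric :: "nat \<Rightarrow> 'a set \<Rightarrow> ('a \<Rightarrow> 'a \<Rightarrow> bool) \<Rightarrow> bool" where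
  "alpha_metric i V E \<longleftrightarrow>
     (\<forall>u\<in>V. \<forall>v\<in>V. \<forall>w\<in>V. \<forall>x\<in>V.
        v \<in> interval V E u w \<and> w \<in> interval V E v x \<and> E v w \<longrightarrow>
        int (dist E u x) \<ge> int (dist E u v) + int (dist E v x) - int i)"

end

theory Submission
  imports Defs
begin

lemma walk_append:
  "walk E xs \<Longrightarrow> walk E ys \<Longrightarrow> last xs = hd ys \<Longrightarrow> walk E (xs @ tl ys)"
proof (induction E xs rule: walk.induct)
  case (1 E) then show ?case by simp
next
  case (2 E x) then show ?case by (cases ys) auto
next
  case (3 E x y xs) then show ?case by auto
qed

lemma walk_rev:
  "(\<forall>x y. E x y \<longrightarrow> E y x) \<Longrightarrow> walk E xs \<Longrightarrow> walk E (rev xs)"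
proof (induction E xs rule: walk.induct)
  case (1 E) then show ?case by simp
next
  case (2 E x) then show ?case by simp
next
  case (3 E x y xs)
  then have w: "walk E (rev (y # xs))" and e: "E y x" by auto
  have w2: "walk E [y, x]" using e by simp
  have "last (rev (y # xs)) = hd [y, x]" by simp
  from walk_append[OF w w2 this] show ?case by simp
qed

lemma wol_trans:
  assumes "walk_of_len E a b n" "walk_of_len E b c m"
  shows "walk_of_len E a c (n + m)"
proof -
  obtain xs where xs: "walk E xs" "hd xs = a" "last xs = b" "length xs = Suc n"
    using assms(1) unfolding walk_of_len_def by blast
  obtain ys where ys: "walk E ys" "hd ys = b" "last ys = c" "length ys = Suc m"
    using assms(2) unfolding walk_of_len_def by blast
  have w: "walk E (xs @ tl ys)" using walk_append xs ys by metis
  have "hd (xs @ tl ys) = a" using xs by (cases xs) auto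
  moreover have "last (xs @ tl ys) = c"
  proof (cases "tl ys = []")
    case True
    then have "ys = [b]" using ys by (cases ys) auto
    then show ?thesis using xs ys by simp
  next
    case False
    then have "last (tl ys) = last ys" by (cases ys) auto
    then show ?thesis using False ys by simp
  qed
  moreover have "length (xs @ tl ys) = Suc (n + m)" using xs ys by simp
  ultimately show ?thesis unfolding walk_of_len_def using w by blast
qed

lemma wol_sym:
  assumes sym: "\<forall>x y. E x y \<longrightarrow> E y x" and "walk_of_len E a b n"
  shows "walk_of_len E b a n"
proof -
  obtain xs where xs: "walk E xs" "hd xs = a" "last xs = b" "length xs = Suc n"
    using assms(2) unfolding walk_of_len_def by blast
  have "xs \<noteq> []" using xs by auto
  then have "hd (rev xs) = b" "last (rev xs) = a" using xs
    by (simp_all add: hd_rev last_rev)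
  then show ?thesis unfolding walk_of_len_def using walk_rev[OF sym xs(1)] xs(4) by auto
qed

lemma dist_le: "walk_of_len E a b n \<Longrightarrow> dist E a b \<le> n"
  unfolding dist_def by (rule Least_le)

lemma dist_wol:
  assumes "connected_graph V E" "a \<in> V" "b \<in> V"
  shows "walk_of_len E a b (dist E a b)"
proof -
  have "\<exists>n. walk_of_len E a b n" using assms unfolding connected_graph_def by blast
  then show ?thesis unfolding dist_def by (rule LeastI_ex)
qed

lemma dist_self: "dist E a a = 0"
proof -
  have "walk_of_len E a a 0" unfolding walk_of_len_def by (rule exI[of _ "[a]"]) simp
  then show ?thesis using dist_le by fastforce
qed

lemma dist_0:
  assumes "connected_graph V E" "a \<in> V" "b \<in> V" "dist E a b = 0"
  shows "a = b"
proof -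
  have "walk_of_len E a b 0" using dist_wol[OF assms(1-3)] assms(4) by simp
  then show ?thesis unfolding walk_of_len_def by (auto simp: length_Suc_conv)
qed

lemma dist_tri:
  assumes "connected_graph V E" "a \<in> V" "b \<in> V" "c \<in> V"
  shows "dist E a c \<le> dist E a b + dist E b c"
  using dist_le wol_trans dist_wol assms by metis

lemma dist_sym:
  assumes "simple_graph V E" "connected_graph V E" "a \<in> V" "b \<in> V"
  shows "dist E a b = dist E b a"
proof -
  have sym: "\<forall>x y. E x y \<longrightarrow> E y x" using assms(1) unfolding simple_graph_def by blast
  have "dist E b a \<le> dist E a b" using dist_le wol_sym[OF sym] dist_wol assms by metis
  moreover have "dist E a b \<le> dist E b a" using dist_le wol_sym[OF sym] dist_wol assms by metis
  ultimately show ?thesis by simp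
qed

lemma dist_edge:
  assumes "simple_graph V E" "connected_graph V E" "E a b"
  shows "dist E a b = 1"
proof -
  have ab: "a \<in> V" "b \<in> V" "a \<noteq> b" using assms(1,3) unfolding simple_graph_def by metis+
  have "walk_of_len E a b 1" unfolding walk_of_len_def
    by (rule exI[of _ "[a,b]"]) (simp add: assms(3))
  then have "dist E a b \<le> 1" by (rule dist_le)
  moreover have "dist E a b \<noteq> 0" using dist_0[OF assms(2) ab(1,2)] ab(3) by blast
  ultimately show ?thesis by simp
qed

lemma dist_step:
  assumes "simple_graph V E" "connected_graph V E" "a \<in> V" "b \<in> V" "dist E a b = Suc m"
  shows "\<exists>c. E a c \<and> dist E c b = m"
proof -
  obtain xs where xs: "walk E xs" "hd xs = a" "last xs = b" "length xs = Suc (Suc m)"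
    using dist_wol[OF assms(2-4)] assms(5) unfolding walk_of_len_def by auto
  then obtain c rest where xs_eq: "xs = a # c # rest"
    by (cases xs; cases "tl xs") auto
  have e: "E a c" and w: "walk E (c # rest)" using xs(1) xs_eq by auto
  have "walk_of_len E c b m" unfolding walk_of_len_def
    using w xs xs_eq by (intro exI[of _ "c # rest"]) auto
  then have le: "dist E c b \<le> m" by (rule dist_le)
  have cV: "c \<in> V" using e assms(1) unfolding simple_graph_def by blast
  have "dist E a b \<le> dist E a c + dist E c b" using dist_tri[OF assms(2,3) cV assms(4)] .
  then have "Suc m \<le> 1 + dist E c b" using dist_edge[OF assms(1,2) e] assms(5) by simp
  then show ?thesis using le e by (intro exI[of _ c]) simp
qed

lemma main:
  assumes G: "simple_graph V E" and C: "connected_graph V E"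
    and A: "alpha_metric i V E" and uV: "u \<in> V" and vV: "v \<in> V"
  shows "\<forall>a b. a \<in> interval V E u v \<longrightarrow> b \<in> interval V E u v \<longrightarrow>
      dist E u a = dist E u b \<longrightarrow> dist E a v = m \<longrightarrow> dist E a b \<le> i + 1"
proof (induction m)
  case 0
  show ?case
  proof (intro allI impI)
    fix a b assume a: "a \<in> interval V E u v" and b: "b \<in> interval V E u v"
      and l: "dist E u a = dist E u b" and m: "dist E a v = 0"
    have aV: "a \<in> V" and bV: "b \<in> V" using a b unfolding interval_def by auto
    have "dist E b v = 0" using a b l m unfolding interval_def by auto
    then have "a = v" "b = v" using dist_0[OF C _ vV] aV bV m by auto
    then show "dist E a b \<le> i + 1" by (simp add: dist_self)
  qed
next
  case (Suc m)
  show ?case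
  proof (intro allI impI)
    fix a b assume a: "a \<in> interval V E u v" and b: "b \<in> interval V E u v"
      and l: "dist E u a = dist E u b" and m: "dist E a v = Suc m"
    have aV: "a \<in> V" and bV: "b \<in> V" using a b unfolding interval_def by auto
    have mb: "dist E b v = Suc m" using a b l m unfolding interval_def by auto
    have adj: "\<exists>a'. E x a' \<and> a' \<in> interval V E u v \<and> dist E u a' = dist E u x + 1
       \<and> dist E a' v = m \<and> a' \<in> V" if xi: "x \<in> interval V E u v" and xm: "dist E x v = Suc m" for x
    proof -
      have xV: "x \<in> V" using xi unfolding interval_def by auto
      obtain a' where e: "E x a'" and d: "dist E a' v = m" using dist_step[OF G C xV vV xm] by blast
      have a'V: "a' \<in> V" using e G unfolding simple_graph_def by blast
      have t1: "dist E u a' \<le> dist E u x + dist E x a'" by (rule dist_tri[OF C uV xV a'V])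
      have t2: "dist E u v \<le> dist E u a' + dist E a' v" by (rule dist_tri[OF C uV a'V vV])
      have xe: "dist E u x + dist E x v = dist E u v" using xi unfolding interval_def by auto
      then have "dist E u a' = dist E u x + 1" using t1 t2 d xm dist_edge[OF G C e] by simp
      then show ?thesis using e d a'V t2 xm xe
        by (intro exI[of _ a']) (auto simp: interval_def)
    qed
    obtain a' where a': "E a a'" "a' \<in> interval V E u v" "dist E u a' = dist E u a + 1"
       "dist E a' v = m" "a' \<in> V" using adj[OF a m] by blast
    obtain b' where b': "E b b'" "b' \<in> interval V E u v" "dist E u b' = dist E u b + 1"
       "dist E b' v = m" "b' \<in> V" using adj[OF b mb] by blast
    have IH: "dist E a' b' \<le> i + 1" using Suc.IH a' b' l by auto
    show "dist E a b \<le> i + 1"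
    proof (rule ccontr)
      assume H: "\<not> dist E a b \<le> i + 1"
      define h where "h = dist E a b"
      have eaa: "dist E a a' = 1" by (rule dist_edge[OF G C a'(1)])
      have ebb: "dist E b b' = 1" by (rule dist_edge[OF G C b'(1)])
      have s1: "dist E a' b = dist E b a'" by (rule dist_sym[OF G C a'(5) bV])
      have s2: "dist E a' a = 1" using dist_sym[OF G C a'(5) aV] eaa by simp
      have s3: "dist E b' b = 1" using dist_sym[OF G C b'(5) bV] ebb by simp
      have s4: "dist E a' b' = dist E b' a'" by (rule dist_sym[OF G C a'(5) b'(5)])
      have t1: "dist E a b \<le> dist E a a' + dist E a' b" by (rule dist_tri[OF C aV a'(5) bV])
      have t2: "dist E a' b \<le> dist E a' a + dist E a b" by (rule dist_tri[OF C a'(5) aV bV])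
      have t3: "dist E a' b \<le> dist E a' b' + dist E b' b" by (rule dist_tri[OF C a'(5) b'(5) bV])
      have bv: "dist E b v \<le> dist E b a + dist E a v" by (rule dist_tri[OF C bV aV vV])
      have sab: "dist E b a = dist E a b" by (rule dist_sym[OF G C bV aV])
      consider "dist E a' b = h - 1" | "dist E a' b = h + 1" | "dist E a' b = h"
        using t1 t2 eaa s2 unfolding h_def by linarith
      then show False
      proof cases
        case 1
        have "a \<in> interval V E u a'" using a' aV eaa by (simp add: interval_def)
        moreover have "a' \<in> interval V E a b" using 1 a' eaa t1 H unfolding h_def
          by (simp add: interval_def)
        ultimately have "int (dist E u b) \<ge> int (dist E u a) + int (dist E a b) - int i"
          using A uV aV a'(5) bV a'(1) unfolding alpha_metric_def by blast
        then show False using H l by simp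
      next
        case 2
        have "a \<in> interval V E b a'" using aV eaa 2 s1 sab unfolding h_def
          by (simp add: interval_def)
        moreover have "a' \<in> interval V E a v" using a' eaa m by (simp add: interval_def)
        ultimately have "int (dist E b v) \<ge> int (dist E b a) + int (dist E a v) - int i"
          using A uV aV a'(5) bV vV a'(1) unfolding alpha_metric_def by blast
        then show False using H m mb sab by simp
      next
        case 3
        have d: "dist E a' b' = h - 1" using t3 s3 IH H 3 unfolding h_def by linarith
        have "b \<in> interval V E u b'" using b' bV ebb by (simp add: interval_def)
        moreover have "b' \<in> interval V E b a'" using b'(5) ebb d s4 3 s1 H unfolding h_def
          by (simp add: interval_def)
        ultimately have "int (dist E u a') \<ge> int (dist E u b) + int (dist E b a') - int i"
          using A uV bV a'(5) b'(5) b'(1) unfolding alpha_metric_def by blast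
        then show False using H l a'(3) 3 s1 unfolding h_def by simp
      qed
    qed
  qed
qed

theorem lemma2:
  fixes V :: "'a set" and E :: "'a \<Rightarrow> 'a \<Rightarrow> bool" and i :: nat
  assumes "simple_graph V E" and "connected_graph V E"
    and "alpha_metric i V E"
    and "u \<in> V" and "v \<in> V"
    and "0 < k" and "k < dist E u v"
    and "x \<in> interval V E u v" and "y \<in> interval V E u v"
    and "dist E u x = k" and "dist E u y = k"
  shows "dist E x y \<le> i + 1"
  using main[OF assms(1-5), of "dist E x v"] assms(8-11) by auto

end
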